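(* Let $-1<\gamma_0<\gamma_1$, $I=[\gamma_0,\gamma_1]$ and $J=[0,1/(1+\gamma_0)]$. For $\varepsilon>0$ let $U_\varepsilon=\{z\in\mathbb C:\ \mathrm{Re}\,z\le\gamma_0-\varepsilon \text{ or } \mathrm{Re}\,z\ge\gamma_1+\varepsilon \text{ or } |\mathrm{Im}\,z|\ge\varepsilon\}$. (1) For every $\varphi\in\mathcal O^1(\overline{\mathbb C}\setminus I)$ the series $\sum_{m\ge1}L_{g(m)}\varphi$ converges uniformly on compact subsets of $\overline{\mathbb C}\setminus J$ to a function $T\varphi\in\mathcal O^1(\overline{\mathbb C}\setminus J)$, and for every compact $K\subset\overline{\mathbb C}\setminus J$ there exist $\varepsilon>0$ and $C_K>0$ such that $\sup_K|T\varphi|\le C_K\sup_{U_\varepsilon}|\varphi|$ for all such $\varphi$. (2) For every $\psi\in\mathcal O^3(\overline{\mathbb C}\setminus I)$ the series $\sum_{m\ge1}L^{(3)}_{g(m)}\psi$ converges uniformly on compact subsets of $\overline{\mathbb C}\setminus J$ to a function $T^{(3)}\psi\in\mathcal O^1(\overline{\mathbb C}\setminus J)$, and for every compact $K\subset\overline{\mathbb C}\setminus J$ there exist $\varepsilon>0$ and $C_K>0$ with $\sup_K|T^{(3)}\psi|\le C_K\sup_{U_\varepsilon}|\psi|$ for all such $\psi$. (3) For every $\varphi\in\mathcal O^1(\overline{\mathbb C}\setminus I)$ one has $T^{(3)}(\varphi'')=(T\varphi)''$.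
   Context: $\overline{\mathbb C}=\mathbb C\cup\{\infty\}$. For a compact interval $I\subset\mathbb R$ and $k\in\mathbb Z$, $\mathcal O^k(\overline{\mathbb C}\setminus I)$ denotes the space of functions holomorphic on $\mathbb C\setminus I$ and meromorphic on $\overline{\mathbb C}\setminus I$ having at $\infty$ a zero of order at least $k$ if $k\ge0$ (resp. a pole of order at most $|k|$ if $k<0$). For an integer $m\ge1$, $g(m)$ denotes the matrix $\begin{pmatrix}0&1\\1&m\end{pmatrix}$, and for $\varphi\in\mathcal O^1(\overline{\mathbb C}\setminus I)$, $\psi\in\mathcal O^3(\overline{\mathbb C}\setminus I)$: $L_{g(m)}\varphi(z)=-z\big[\varphi(\tfrac1z-m)-\varphi(-m)\big]+\varphi'(-m)$, and $L^{(3)}_{g(m)}\psi(z)=-z^{-3}\psi(\tfrac1z-m)$. *)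

theory Defs
  imports "HOL-Analysis.Analysis"
begin

text \<open>O^k(Cbar minus S), for a compact S of the complex plane: holomorphic on the
  complement of S and meromorphic at infinity with a zero of order at least k
  (k \<ge> 0) resp. a pole of order at most -k (k < 0); i.e. f(1/w) = w^k g(w) near w = 0
  with g holomorphic at 0.\<close>
definition Ok :: "int \<Rightarrow> complex set \<Rightarrow> (complex \<Rightarrow> complex) \<Rightarrow> bool" where
  "Ok k S f \<longleftrightarrow> f holomorphic_on (- S) \<and>
     (\<exists>r>0. \<exists>g. g holomorphic_on ball 0 r \<and>
        (\<forall>w. 0 < norm w \<and> norm w < r \<and> inverse w \<notin> S \<longrightarrow> f (inverse w) = w powi k * g w))"

definition cinterval :: "real \<Rightarrow> real \<Rightarrow> complex set" where
  "cinterval a b = complex_of_real ` {a..b}"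

definition Lg :: "nat \<Rightarrow> (complex \<Rightarrow> complex) \<Rightarrow> complex \<Rightarrow> complex" where
  "Lg m \<phi> z = - z * (\<phi> (inverse z - of_nat m) - \<phi> (- of_nat m)) + deriv \<phi> (- of_nat m)"

definition Lg3 :: "nat \<Rightarrow> (complex \<Rightarrow> complex) \<Rightarrow> complex \<Rightarrow> complex" where
  "Lg3 m \<psi> z = - (inverse z ^ 3) * \<psi> (inverse z - of_nat m)"

definition Top :: "(complex \<Rightarrow> complex) \<Rightarrow> complex \<Rightarrow> complex" where
  "Top \<phi> z = (\<Sum>m. Lg (Suc m) \<phi> z)"

definition Top3 :: "(complex \<Rightarrow> complex) \<Rightarrow> complex \<Rightarrow> complex" where
  "Top3 \<psi> z = (\<Sum>m. Lg3 (Suc m) \<psi> z)"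

definition Ueps :: "real \<Rightarrow> real \<Rightarrow> real \<Rightarrow> complex set" where
  "Ueps g0 g1 \<epsilon> = {z. Re z \<le> g0 - \<epsilon> \<or> Re z \<ge> g1 + \<epsilon> \<or> \<bar>Im z\<bar> \<ge> \<epsilon>}"

end

theory Submission
  imports Defs "HOL-Complex_Analysis.Complex_Analysis"
begin


lemma cint_mem: "z \<in> cinterval a b \<longleftrightarrow> Im z = 0 \<and> a \<le> Re z \<and> Re z \<le> b"
  unfolding cinterval_def
  by (auto simp: complex_eq_iff intro!: image_eqI[where x="Re z"])

lemma Ueps_left: "Re z \<le> g0 - e \<Longrightarrow> z \<in> Ueps g0 g1 e"
  by (simp add: Ueps_def)

lemma Ueps_notI: "0 < e \<Longrightarrow> z \<in> Ueps g0 g1 e \<Longrightarrow> z \<notin> cinterval g0 g1"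
  by (auto simp: Ueps_def cint_mem)

lemma closed_Ueps: "closed (Ueps g0 g1 e)"
proof -
  have "Ueps g0 g1 e = {z. Re z \<le> g0 - e} \<union> {z. g1 + e \<le> Re z} \<union> {z. e \<le> \<bar>Im z\<bar>}"
    by (auto simp: Ueps_def)
  moreover have "closed {z. Re z \<le> g0 - e}" "closed {z. g1 + e \<le> Re z}" "closed {z. e \<le> \<bar>Im z\<bar>}"
    by (auto intro!: closed_Collect_le continuous_intros)
  ultimately show ?thesis by (metis closed_Un)
qed

lemma closed_cint: "closed (cinterval a b)" and compact_cint: "compact (cinterval a b)"
proof -
  show "compact (cinterval a b)" unfolding cinterval_def
    by (intro compact_continuous_image continuous_intros) auto
  then show "closed (cinterval a b)" by (rule compact_imp_closed)
qed

lemma Re_near_m: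
  fixes g0 :: real and m :: nat
  assumes "-1 < g0" "1 \<le> m" "norm (\<zeta> + of_nat m) \<le> (min (1+g0) 1 / 2) * m"
  shows "Re \<zeta> \<le> g0 - (1+g0)/2"
proof -
  define c where "c = min (1+g0) 1 / 2"
  have c: "0 < c" "c \<le> 1/2" "c \<le> (1+g0)/2" using assms by (auto simp: c_def)
  have "Re \<zeta> + m \<le> norm (\<zeta> + of_nat m)"
    using abs_Re_le_cmod[of "\<zeta> + of_nat m"] by simp
  hence "Re \<zeta> \<le> - m + c * m" using assms(3) by (simp add: c_def)
  also have "\<dots> = - (m * (1 - c))" by (simp add: algebra_simps)
  also have "\<dots> \<le> - (1 * (1 - c))"
  proof -
    have "(1::real) * (1-c) \<le> real m * (1-c)" by (rule mult_right_mono) (use assms(2) c in auto)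
    thus ?thesis by linarith
  qed
  finally have "Re \<zeta> \<le> c - 1" by simp
  thus ?thesis using c(3) by (simp add: field_simps)
qed

lemma big_in_Ueps:
  assumes "0 < e" "e \<le> 1/2" "\<bar>g0\<bar> + \<bar>g1\<bar> + 2 \<le> norm z"
  shows "z \<in> Ueps g0 g1 e"
proof (rule ccontr)
  assume "z \<notin> Ueps g0 g1 e"
  hence h: "g0 - e < Re z" "Re z < g1 + e" "\<bar>Im z\<bar> < e" by (auto simp: Ueps_def)
  have "norm z \<le> \<bar>Re z\<bar> + \<bar>Im z\<bar>" by (rule cmod_le)
  also have "\<dots> < \<bar>g0\<bar> + \<bar>g1\<bar> + 2" using h assms by linarith
  finally show False using assms by simp
qed


definition cc :: "real \<Rightarrow> real" where "cc g0 = min (1+g0) 1 / 2"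

lemma cc_pos: "-1 < g0 \<Longrightarrow> 0 < cc g0" by (simp add: cc_def)

lemma near_m_notI:
  fixes m :: nat and \<zeta> :: complex
  assumes "-1 < g0" "1 \<le> m" "norm (\<zeta> + of_nat m) \<le> cc g0 * m"
  shows "\<zeta> \<notin> cinterval g0 g1"
proof -
  have "Re \<zeta> \<le> g0 - (1+g0)/2" using Re_near_m[OF assms(1,2), of \<zeta>] assms(3) by (simp add: cc_def)
  hence "Re \<zeta> < g0" using assms(1) by (simp add: field_simps)
  thus ?thesis by (simp add: cint_mem)
qed

lemma near_m_Ueps:
  fixes m :: nat and \<zeta> :: complex
  assumes "-1 < g0" "1 \<le> m" "norm (\<zeta> + of_nat m) \<le> cc g0 * m" "e \<le> (1+g0)/2"
  shows "\<zeta> \<in> Ueps g0 g1 e"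
proof -
  have "Re \<zeta> \<le> g0 - (1+g0)/2" using Re_near_m[OF assms(1,2), of \<zeta>] assms(3) by (simp add: cc_def)
  hence "Re \<zeta> \<le> g0 - e" using assms(4) by linarith
  thus ?thesis by (rule Ueps_left)
qed

lemma Cauchy_d1:
  fixes m :: nat
  assumes g0: "-1 < g0" and e: "e \<le> (1+g0)/2"
    and hol: "\<phi> holomorphic_on - cinterval g0 g1"
    and bd: "\<forall>w\<in>Ueps g0 g1 e. norm (\<phi> w) \<le> M" and m: "1 \<le> m"
  shows "norm (deriv \<phi> (- of_nat m)) \<le> M / (cc g0 * m)"
proof -
  define r where "r = cc g0 * m"
  have r: "0 < r" using cc_pos[OF g0] m by (simp add: r_def)
  have sub: "cball (- of_nat m) r \<subseteq> - cinterval g0 g1"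
    using near_m_notI[OF g0 m] by (auto simp: r_def dist_norm norm_minus_commute add.commute)
  have "norm ((deriv ^^ 1) \<phi> (- of_nat m)) \<le> fact 1 * M / r ^ 1"
  proof (rule Cauchy_inequality)
    show "\<phi> holomorphic_on ball (- of_nat m) r"
      using hol sub ball_subset_cball by (meson holomorphic_on_subset order_trans)
    show "continuous_on (cball (- of_nat m) r) \<phi>"
      using hol sub holomorphic_on_imp_continuous_on continuous_on_subset by blast
    show "0 < r" by (fact r)
    fix x :: complex assume "norm (- of_nat m - x) = r"
    hence "norm (x + of_nat m) \<le> cc g0 * m"
      by (simp add: r_def norm_minus_commute add.commute flip: norm_minus_cancel[of "- of_nat m - x"])
    hence "x \<in> Ueps g0 g1 e" by (rule near_m_Ueps[OF g0 m _ e])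
    thus "norm (\<phi> x) \<le> M" using bd by blast
  qed
  thus ?thesis by (simp add: r_def)
qed

definition P1 :: "(complex \<Rightarrow> complex) \<Rightarrow> nat \<Rightarrow> complex \<Rightarrow> complex" where
  "P1 \<phi> m = (\<lambda>z. if z = 0 then deriv (\<lambda>w. \<phi> (w - of_nat m)) 0
                   else (\<phi> (z - of_nat m) - \<phi> (0 - of_nat m)) / (z - 0))"

definition P2 :: "(complex \<Rightarrow> complex) \<Rightarrow> nat \<Rightarrow> complex \<Rightarrow> complex" where
  "P2 \<phi> m = (\<lambda>z. if z = 0 then deriv (P1 \<phi> m) 0 else (P1 \<phi> m z - P1 \<phi> m 0) / (z - 0))"

lemma shift_hol:
  fixes m :: nat
  assumes g0: "-1 < g0" and hol: "\<phi> holomorphic_on - cinterval g0 g1" and m: "1 \<le> m"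
  shows "(\<lambda>w. \<phi> (w - of_nat m)) holomorphic_on ball 0 (cc g0 * m)"
proof -
  have "(\<lambda>w. w - of_nat m) ` ball 0 (cc g0 * m) \<subseteq> - cinterval g0 g1"
    using near_m_notI[OF g0 m] by auto
  then show ?thesis
    by (intro holomorphic_on_compose_gen[OF _ hol, unfolded o_def]) (auto intro!: holomorphic_intros)
qed

lemma P1_hol:
  fixes m :: nat
  assumes g0: "-1 < g0" and hol: "\<phi> holomorphic_on - cinterval g0 g1" and m: "1 \<le> m"
  shows "P1 \<phi> m holomorphic_on ball 0 (cc g0 * m)"
proof -
  have "0 \<in> interior (ball 0 (cc g0 * m))" using cc_pos[OF g0] m by simp
  from pole_lemma[OF shift_hol[OF g0 hol m] this] show ?thesis
    by (simp add: P1_def)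
qed

lemma P2_hol:
  fixes m :: nat
  assumes g0: "-1 < g0" and hol: "\<phi> holomorphic_on - cinterval g0 g1" and m: "1 \<le> m"
  shows "P2 \<phi> m holomorphic_on ball 0 (cc g0 * m)"
proof -
  have "0 \<in> interior (ball 0 (cc g0 * m))" using cc_pos[OF g0] m by simp
  from pole_lemma[OF P1_hol[OF g0 hol m] this] show ?thesis
    by (simp add: P2_def)
qed

lemma P1_0:
  fixes m :: nat
  assumes g0: "-1 < g0" and hol: "\<phi> holomorphic_on - cinterval g0 g1" and m: "1 \<le> m"
  shows "P1 \<phi> m 0 = deriv \<phi> (- of_nat m)"
proof -
  have "- of_nat m \<notin> cinterval g0 g1" using near_m_notI[OF g0 m, of "- of_nat m"] cc_pos[OF g0] m by simp
  hence "\<phi> field_differentiable at (- of_nat m)"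
    using hol by (meson ComplI holomorphic_on_imp_differentiable_at open_Compl closed_cint)
  hence d: "(\<phi> has_field_derivative deriv \<phi> (- of_nat m)) (at (0 - of_nat m))"
    by (simp add: DERIV_deriv_iff_field_differentiable)
  have "((\<lambda>w. \<phi> (w - of_nat m)) has_field_derivative deriv \<phi> (- of_nat m) * 1) (at 0)"
    by (rule DERIV_chain2[where g="\<lambda>w. w - of_nat m", OF d]) (auto intro!: derivative_eq_intros)
  thus ?thesis by (simp add: P1_def DERIV_imp_deriv)
qed

lemma P2_eq:
  fixes m :: nat
  assumes g0: "-1 < g0" and hol: "\<phi> holomorphic_on - cinterval g0 g1" and m: "1 \<le> m" and w: "w \<noteq> 0"
  shows "P2 \<phi> m w = ((\<phi> (w - of_nat m) - \<phi> (- of_nat m)) / w - deriv \<phi> (- of_nat m)) / w"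
  using w P1_0[OF g0 hol m] by (simp add: P2_def) (simp add: P1_def)

lemma Lg_eq:
  fixes m :: nat
  assumes g0: "-1 < g0" and hol: "\<phi> holomorphic_on - cinterval g0 g1" and m: "1 \<le> m" and w: "w \<noteq> 0"
  shows "Lg m \<phi> (inverse w) = - w * P2 \<phi> m w"
  using w by (simp add: P2_eq[OF assms] Lg_def field_simps)


lemma P2_bound:
  fixes m :: nat
  assumes g0: "-1 < g0" and e: "e \<le> (1+g0)/2"
    and hol: "\<phi> holomorphic_on - cinterval g0 g1"
    and bd: "\<forall>w\<in>Ueps g0 g1 e. norm (\<phi> w) \<le> M" and m: "1 \<le> m"
    and w: "norm w \<le> cc g0 * m / 2"
  shows "norm (P2 \<phi> m w) \<le> 10 * M / (cc g0 * m)^2"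
proof -
  define q where "q = cc g0 * m"
  have q: "0 < q" using cc_pos[OF g0] m by (simp add: q_def)
  define s where "s = q / 2"
  have s: "0 < s" "s < q" using q by (auto simp: s_def)
  have cb: "cball 0 s \<subseteq> ball 0 q" using s by auto
  have hq: "P2 \<phi> m holomorphic_on ball 0 q" using P2_hol[OF g0 hol m] by (simp add: q_def)
  have D: "norm (deriv \<phi> (- of_nat m)) \<le> M / q" using Cauchy_d1[OF g0 e hol bd m] by (simp add: q_def)
  have phim: "norm (\<phi> (- of_nat m)) \<le> M"
    using bd near_m_Ueps[OF g0 m _ e, of "- of_nat m"] q by (simp add: q_def)
  have "norm (P2 \<phi> m w) \<le> ((M+M)/s + M/q)/s"
  proof (rule maximum_modulus_frontier[where S="cball 0 s" and f="P2 \<phi> m" and \<xi>=w])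
    show "P2 \<phi> m holomorphic_on interior (cball 0 s)"
    proof -
      have "ball 0 s \<subseteq> ball 0 q" using s by auto
      thus ?thesis using holomorphic_on_subset[OF hq] by simp
    qed
    show "continuous_on (closure (cball 0 s)) (P2 \<phi> m)"
      using continuous_on_subset[OF holomorphic_on_imp_continuous_on[OF hq] cb] by simp
    show "bounded (cball 0 s)" by simp
    show "w \<in> cball 0 s" using w by (simp add: s_def q_def)
    fix z :: complex assume "z \<in> frontier (cball 0 s)"
    hence z: "norm z = s" using s by simp
    hence z0: "z \<noteq> 0" using s by auto
    have "z - of_nat m \<in> Ueps g0 g1 e"
      using z s by (intro near_m_Ueps[OF g0 m _ e]) (simp add: q_def)
    hence phiz: "norm (\<phi> (z - of_nat m)) \<le> M" using bd by blast
    have "norm (P2 \<phi> m z) = norm ((\<phi> (z - of_nat m) - \<phi> (- of_nat m)) / z - deriv \<phi> (- of_nat m)) / s"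
      using P2_eq[OF g0 hol m z0] z by (simp add: norm_divide)
    also have "\<dots> \<le> (norm (\<phi> (z - of_nat m) - \<phi> (- of_nat m)) / s + norm (deriv \<phi> (- of_nat m))) / s"
    proof (rule divide_right_mono)
      have "norm ((\<phi> (z - of_nat m) - \<phi> (- of_nat m)) / z - deriv \<phi> (- of_nat m))
         \<le> norm ((\<phi> (z - of_nat m) - \<phi> (- of_nat m)) / z) + norm (deriv \<phi> (- of_nat m))"
        by (rule norm_triangle_ineq4)
      also have "norm ((\<phi> (z - of_nat m) - \<phi> (- of_nat m)) / z) = norm (\<phi> (z - of_nat m) - \<phi> (- of_nat m)) / s"
        by (simp add: norm_divide z)
      finally show "norm ((\<phi> (z - of_nat m) - \<phi> (- of_nat m)) / z - deriv \<phi> (- of_nat m))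
         \<le> norm (\<phi> (z - of_nat m) - \<phi> (- of_nat m)) / s + norm (deriv \<phi> (- of_nat m))" .
    qed (use s in simp)
    also have "\<dots> \<le> ((M + M) / s + M / q) / s"
    proof (rule divide_right_mono)
      have "norm (\<phi> (z - of_nat m) - \<phi> (- of_nat m)) \<le> M + M"
        using phiz phim norm_triangle_ineq4[of "\<phi> (z - of_nat m)" "\<phi> (- of_nat m)"] by linarith
      hence "norm (\<phi> (z - of_nat m) - \<phi> (- of_nat m)) / s \<le> (M + M) / s"
        using s by (simp add: divide_right_mono)
      thus "norm (\<phi> (z - of_nat m) - \<phi> (- of_nat m)) / s + norm (deriv \<phi> (- of_nat m)) \<le> (M + M) / s + M / q"
        using D by linarith
    qed (use s in simp)
    finally show "norm (P2 \<phi> m z) \<le> ((M + M) / s + M / q) / s" .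
  qed
  also have "\<dots> = 10 * M / q^2" using q by (simp add: s_def field_simps power2_eq_square)
  finally show ?thesis by (simp add: q_def)
qed

lemma Lg_bound:
  fixes m :: nat and z :: complex
  assumes g0: "-1 < g0" and e: "e \<le> (1+g0)/2"
    and hol: "\<phi> holomorphic_on - cinterval g0 g1"
    and bd: "\<forall>w\<in>Ueps g0 g1 e. norm (\<phi> w) \<le> M" and m: "1 \<le> m"
    and z: "z \<noteq> 0" "norm (inverse z) \<le> B" "inverse z - of_nat m \<in> Ueps g0 g1 e"
  shows "norm (Lg m \<phi> z) \<le> 10 * B * M / (cc g0 * m)^2"
proof -
  define q where "q = cc g0 * m"
  have q: "0 < q" using cc_pos[OF g0] m by (simp add: q_def)
  define w where "w = inverse z"
  have w0: "w \<noteq> 0" using z by (simp add: w_def)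
  have zw: "z = inverse w" by (simp add: w_def)
  have D: "norm (deriv \<phi> (- of_nat m)) \<le> M / q" using Cauchy_d1[OF g0 e hol bd m] by (simp add: q_def)
  have phim: "norm (\<phi> (- of_nat m)) \<le> M"
    using bd near_m_Ueps[OF g0 m _ e, of "- of_nat m"] q by (simp add: q_def)
  have M0: "0 \<le> M" using phim norm_ge_zero order_trans by blast
  have B0: "0 \<le> B" using z(2) norm_ge_zero order_trans by blast
  have phiw: "norm (\<phi> (w - of_nat m)) \<le> M" using bd z(3) by (simp add: w_def)
  show ?thesis
  proof (cases "norm w \<le> q / 2")
    case True
    have "norm (Lg m \<phi> z) = norm w * norm (P2 \<phi> m w)"
      using Lg_eq[OF g0 hol m w0] by (simp add: zw norm_mult)
    also have "\<dots> \<le> B * (10 * M / q^2)"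
      using P2_bound[OF g0 e hol bd m, of w] True z(2) B0
      by (intro mult_mono) (auto simp: q_def w_def)
    finally show ?thesis by (simp add: q_def algebra_simps)
  next
    case False
    have wq: "q / 2 < norm w" using False by simp
    have "norm (Lg m \<phi> z) \<le> norm (z * (\<phi> (w - of_nat m) - \<phi> (- of_nat m))) + norm (deriv \<phi> (- of_nat m))"
      unfolding Lg_def using norm_triangle_ineq[of "- z * (\<phi> (w - of_nat m) - \<phi> (- of_nat m))"]
      by (simp add: w_def)
    also have "\<dots> \<le> (M + M) / norm w + M / q"
    proof (intro add_mono D)
      have "norm (z * (\<phi> (w - of_nat m) - \<phi> (- of_nat m))) = norm (\<phi> (w - of_nat m) - \<phi> (- of_nat m)) / norm w"
        by (simp add: zw norm_mult norm_inverse divide_inverse mult.commute)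
      also have "\<dots> \<le> (M + M) / norm w"
        using phiw phim norm_triangle_ineq4[of "\<phi> (w - of_nat m)" "\<phi> (- of_nat m)"]
        by (intro divide_right_mono) auto
      finally show "norm (z * (\<phi> (w - of_nat m) - \<phi> (- of_nat m))) \<le> (M + M) / norm w" .
    qed
    also have "\<dots> \<le> (M + M) / (q / 2) + M / q"
    proof -
      have "(M + M) / norm w \<le> (M + M) / (q / 2)"
        using wq q M0 w0 by (intro divide_left_mono) auto
      thus ?thesis by linarith
    qed
    also have "\<dots> = 5 * M / q" using q by (simp add: field_simps)
    also have "\<dots> \<le> 10 * B * M / q^2"
    proof -
      have "q \<le> 2 * B" using wq z(2) by (simp add: w_def)
      hence "(5 * M) * q \<le> (5 * M) * (2 * B)" using M0 by (intro mult_left_mono) auto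
      hence "5 * M * q \<le> 10 * B * M" by (simp add: algebra_simps)
      thus ?thesis using q by (simp add: field_simps power2_eq_square)
    qed
    finally show ?thesis by (simp add: q_def)
  qed
qed


lemma I_norm_small:
  assumes "z \<in> cinterval g0 g1" shows "norm z \<le> \<bar>g0\<bar> + \<bar>g1\<bar>"
proof -
  have "Im z = 0" "g0 \<le> Re z" "Re z \<le> g1" using assms by (auto simp: cint_mem)
  moreover have "norm z \<le> \<bar>Re z\<bar> + \<bar>Im z\<bar>" by (rule cmod_le)
  ultimately show ?thesis by linarith
qed

lemma psi_decay:
  fixes \<psi> :: "complex \<Rightarrow> complex" and \<zeta> :: complex
  assumes Ok3: "Ok 3 (cinterval g0 g1) \<psi>" and e: "0 < e" "e \<le> 1/2"
    and bd: "\<forall>w\<in>Ueps g0 g1 e. norm (\<psi> w) \<le> M"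
    and rho: "\<rho> = \<bar>g0\<bar> + \<bar>g1\<bar> + 2" and z: "\<rho> \<le> norm \<zeta>"
  shows "norm (\<psi> \<zeta>) \<le> M * \<rho>^3 / norm \<zeta> ^ 3"
proof -
  obtain r g where r: "r > 0" and hg: "g holomorphic_on ball 0 r"
    and eq: "\<And>w. 0 < norm w \<Longrightarrow> norm w < r \<Longrightarrow> inverse w \<notin> cinterval g0 g1 \<Longrightarrow> \<psi> (inverse w) = w powi 3 * g w"
    using Ok3 unfolding Ok_def by blast
  have hol: "\<psi> holomorphic_on - cinterval g0 g1" using Ok3 by (simp add: Ok_def)
  define s' where "s' = 1 / (\<rho> - 1)"
  have rho1: "1 \<le> \<rho> - 1" using rho by simp
  have s': "0 < s'" using rho1 by (simp add: s'_def)
  have A: "inverse u \<notin> cinterval g0 g1" if "0 < norm u" "norm u < s'" for u :: complex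
  proof
    assume "inverse u \<in> cinterval g0 g1"
    hence "norm (inverse u) \<le> \<bar>g0\<bar> + \<bar>g1\<bar>" by (rule I_norm_small)
    moreover have "norm (inverse u) > \<rho> - 1"
    proof -
      have "norm u * (\<rho> - 1) < 1" using that rho1 by (simp add: s'_def field_simps)
      hence "\<rho> - 1 < 1 / norm u" using that(1) by (simp add: less_divide_eq mult.commute)
      thus ?thesis by (simp add: norm_divide inverse_eq_divide)
    qed
    ultimately show False using rho by linarith
  qed
  define k where "k u = (if u = 0 then g 0 else \<psi> (inverse u) / u^3)" for u :: complex
  have hk: "k holomorphic_on ball 0 s'"
    unfolding holomorphic_on_open[OF open_ball]
  proof
    fix u :: complex assume u: "u \<in> ball 0 s'"
    show "\<exists>f'. (k has_field_derivative f') (at u)"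
    proof (cases "u = 0")
      case True
      have "g field_differentiable at 0" using hg r
        by (meson centre_in_ball holomorphic_on_imp_differentiable_at open_ball)
      then obtain f' where d: "(g has_field_derivative f') (at 0)" by (auto simp: field_differentiable_def)
      have "(k has_field_derivative f') (at 0)"
      proof (rule has_field_derivative_transform_within_open[OF d, of "ball 0 (min r s')"])
        fix x :: complex assume x: "x \<in> ball 0 (min r s')"
        show "g x = k x"
        proof (cases "x = 0")
          case False
          have "\<psi> (inverse x) = x powi 3 * g x" using x False A[of x] by (intro eq) auto
          thus ?thesis using False by (simp add: k_def power_int_def)
        qed (simp add: k_def)
      qed (use r s' in auto)
      thus ?thesis using True by blast
    next
      case False
      have h2: "(\<lambda>u. \<psi> (inverse u) / u^3) holomorphic_on (ball 0 s' - {0})"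
      proof (intro holomorphic_intros)
        have "inverse ` (ball 0 s' - {0}) \<subseteq> - cinterval g0 g1" using A by auto
        thus "(\<lambda>u. \<psi> (inverse u)) holomorphic_on ball 0 s' - {0}"
          by (intro holomorphic_on_compose_gen[OF _ hol, unfolded o_def]) (auto intro!: holomorphic_intros)
      qed auto
      have "open (ball 0 s' - {0})" by auto
      then obtain f' where d: "((\<lambda>u. \<psi> (inverse u) / u^3) has_field_derivative f') (at u)"
        using h2 u False holomorphic_on_open by blast
      have "(k has_field_derivative f') (at u)"
        by (rule has_field_derivative_transform_within_open[OF d, of "ball 0 s' - {0}"])
           (use u False in \<open>auto simp: k_def\<close>)
      thus ?thesis by blast
    qed
  qed
  have rs: "1 / \<rho> < s'" using rho1 by (simp add: s'_def field_simps)
  have rho0: "0 < \<rho>" using rho1 by simp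
  have cb: "cball 0 (1/\<rho>) \<subseteq> ball 0 s'" using rs by auto
  define u where "u = inverse \<zeta>"
  have u0: "u \<noteq> 0" using z rho0 by (auto simp: u_def)
  have un: "norm u \<le> 1 / \<rho>"
  proof -
    have "norm u = 1 / norm \<zeta>" by (simp add: u_def norm_divide inverse_eq_divide)
    also have "\<dots> \<le> 1 / \<rho>"
    proof -
      have "0 < norm \<zeta>" using z rho0 by linarith
      thus ?thesis using z rho0 by (intro divide_left_mono) auto
    qed
    finally show ?thesis .
  qed
  have ku: "norm (k u) \<le> M * \<rho>^3"
  proof (rule maximum_modulus_frontier[where S="cball 0 (1/\<rho>)" and f=k and \<xi>=u])
    show "k holomorphic_on interior (cball 0 (1 / \<rho>))"
    proof -
      have "ball 0 (1/\<rho>) \<subseteq> ball 0 s'" using rs by auto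
      thus ?thesis using holomorphic_on_subset[OF hk] by simp
    qed
    show "continuous_on (closure (cball 0 (1 / \<rho>))) k"
      using continuous_on_subset[OF holomorphic_on_imp_continuous_on[OF hk] cb] by simp
    show "bounded (cball 0 (1 / \<rho>))" by simp
    show "u \<in> cball 0 (1 / \<rho>)" using un by simp
    fix v :: complex assume "v \<in> frontier (cball 0 (1 / \<rho>))"
    hence v: "norm v = 1 / \<rho>" using rho0 by simp
    hence v0: "v \<noteq> 0" using rho0 by auto
    have "norm (inverse v) = \<rho>" using v rho0 by (simp add: norm_inverse)
    hence "inverse v \<in> Ueps g0 g1 e" using e rho by (intro big_in_Ueps) auto
    hence "norm (\<psi> (inverse v)) \<le> M" using bd by blast
    moreover have "norm (k v) = norm (\<psi> (inverse v)) * \<rho>^3"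
    proof -
      have "norm (k v) = norm (\<psi> (inverse v)) / (1/\<rho>)^3" using v v0 by (simp add: k_def norm_divide norm_power)
      also have "\<dots> = norm (\<psi> (inverse v)) * \<rho>^3" using rho0 by (simp add: power_one_over)
      finally show ?thesis .
    qed
    ultimately show "norm (k v) \<le> M * \<rho>^3" using rho0 by (simp add: mult_right_mono)
  qed
  have "\<psi> \<zeta> = u^3 * k u" using u0 by (simp add: k_def u_def)
  hence "norm (\<psi> \<zeta>) = norm (k u) / norm \<zeta> ^ 3"
    by (simp add: u_def norm_mult norm_power norm_divide field_simps)
  also have "\<dots> \<le> M * \<rho>^3 / norm \<zeta> ^ 3" using ku by (simp add: divide_right_mono)
  finally show ?thesis .
qed

definition Qpsi :: "real \<Rightarrow> real \<Rightarrow> real \<Rightarrow> real" where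
  "Qpsi g0 g1 B = 8 * (\<bar>g0\<bar> + \<bar>g1\<bar> + 2)^3 + (2 * (B + (\<bar>g0\<bar> + \<bar>g1\<bar> + 2)))^2"

lemma psi_term:
  fixes \<psi> :: "complex \<Rightarrow> complex" and m :: nat
  assumes Ok3: "Ok 3 (cinterval g0 g1) \<psi>" and e: "0 < e" "e \<le> 1/2"
    and bd: "\<forall>w\<in>Ueps g0 g1 e. norm (\<psi> w) \<le> M"
    and m: "1 \<le> m" and w: "norm w \<le> B" "w - of_nat m \<in> Ueps g0 g1 e"
  shows "norm (\<psi> (w - of_nat m)) \<le> M * Qpsi g0 g1 B / m^2"
proof -
  define \<rho> where "\<rho> = \<bar>g0\<bar> + \<bar>g1\<bar> + 2"
  have rho0: "2 \<le> \<rho>" by (simp add: \<rho>_def)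
  have B0: "0 \<le> B" using w(1) norm_ge_zero order_trans by blast
  have pm: "norm (\<psi> (w - of_nat m)) \<le> M" using bd w(2) by blast
  hence M0: "0 \<le> M" using norm_ge_zero order_trans by blast
  have mpos: "(1::real) \<le> m" using m by simp
  have Q: "Qpsi g0 g1 B = 8 * \<rho>^3 + (2 * (B + \<rho>))^2" by (simp add: Qpsi_def \<rho>_def)
  show ?thesis
  proof (cases "2 * (B + \<rho>) \<le> m")
    case True
    have "norm (w - of_nat m) \<ge> m - B"
      using norm_triangle_ineq2[of "of_nat m" w] w(1) by (simp add: norm_minus_commute)
    hence wm: "norm (w - of_nat m) \<ge> m / 2" using True rho0 B0 by argo
    have "\<rho> \<le> norm (w - of_nat m)" using wm True B0 by argo
    hence "norm (\<psi> (w - of_nat m)) \<le> M * \<rho>^3 / norm (w - of_nat m) ^ 3"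
      using psi_decay[OF Ok3 e bd \<rho>_def] by blast
    also have "\<dots> \<le> M * \<rho>^3 / (m/2)^3"
    proof -
      have m2: "0 < real m / 2" using mpos by simp
      hence "0 < norm (w - of_nat m)" using wm by (rule less_le_trans)
      thus ?thesis using wm m2 M0 rho0 by (intro divide_left_mono power_mono mult_nonneg_nonneg mult_pos_pos zero_less_power) auto
    qed
    also have "\<dots> = 8 * M * \<rho>^3 / m^3" by (simp add: field_simps)
    also have "\<dots> \<le> 8 * M * \<rho>^3 / m^2"
      using mpos M0 rho0 by (intro divide_left_mono) (auto simp: power_increasing)
    also have "\<dots> \<le> M * Qpsi g0 g1 B / m^2"
      unfolding Q using M0 mpos by (intro divide_right_mono) (auto simp: algebra_simps)
    finally show ?thesis .
  next
    case False
    have "real m ^ 2 \<le> (2 * (B + \<rho>))^2" using False mpos by (intro power_mono) auto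
    hence "1 \<le> (2 * (B + \<rho>))^2 / m^2" using mpos by (simp add: field_simps)
    hence "M * 1 \<le> M * ((2 * (B + \<rho>))^2 / m^2)" using M0 by (rule mult_left_mono)
    hence "M \<le> M * ((2 * (B + \<rho>))^2 / m^2)" by simp
    also have "\<dots> \<le> M * Qpsi g0 g1 B / m^2"
      unfolding Q using M0 mpos rho0 by (simp add: divide_right_mono mult_left_mono)
    finally show ?thesis using pm by linarith
  qed
qed

lemma Lg3_bound:
  fixes \<psi> :: "complex \<Rightarrow> complex" and m :: nat and z :: complex
  assumes Ok3: "Ok 3 (cinterval g0 g1) \<psi>" and e: "0 < e" "e \<le> 1/2"
    and bd: "\<forall>w\<in>Ueps g0 g1 e. norm (\<psi> w) \<le> M"
    and m: "1 \<le> m" and z: "norm (inverse z) \<le> B" "inverse z - of_nat m \<in> Ueps g0 g1 e"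
  shows "norm (Lg3 m \<psi> z) \<le> B^3 * (M * Qpsi g0 g1 B / m^2)"
proof -
  have "norm (Lg3 m \<psi> z) = norm (inverse z) ^ 3 * norm (\<psi> (inverse z - of_nat m))"
    by (simp add: Lg3_def norm_mult norm_power)
  also have "\<dots> \<le> B^3 * (M * Qpsi g0 g1 B / m^2)"
  proof -
    have B0: "0 \<le> B" using z(1) norm_ge_zero order_trans by blast
    show ?thesis using psi_term[OF Ok3 e bd m z] z(1) B0 by (intro mult_mono power_mono) auto
  qed
  finally show ?thesis .
qed


lemma K_choice:
  fixes K :: "complex set"
  assumes g0: "-1 < g0" and K: "closed K" "K \<inter> cinterval 0 (1/(1+g0)) = {}"
  shows "\<exists>e>0. e \<le> (1+g0)/4 \<and> e \<le> 1/2 \<and> (\<exists>B>0. \<forall>z\<in>K. z \<noteq> 0 \<and> norm (inverse z) \<le> B \<and>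
            (\<forall>m::nat. 1 \<le> m \<longrightarrow> inverse z - of_nat m \<in> Ueps g0 g1 e))"
proof -
  define d where "d = 1 + g0"
  have d: "0 < d" using g0 by (simp add: d_def)
  obtain \<delta> where \<delta>: "\<delta> > 0" and sep: "\<And>x y. x \<in> cinterval 0 (1/d) \<Longrightarrow> y \<in> K \<Longrightarrow> \<delta> \<le> dist x y"
  proof -
    have "cinterval 0 (1/d) \<inter> K = {}" using K(2) by (auto simp: d_def)
    from separate_compact_closed[OF compact_cint K(1) this] show ?thesis using that by blast
  qed
  define e where "e = min (d/4) (min (1/2) (\<delta> * d^2 / 4))"
  have e: "0 < e" "e \<le> d/4" "e \<le> 1/2" "e \<le> \<delta> * d^2 / 4" using d \<delta> by (auto simp: e_def)
  have "\<forall>z\<in>K. z \<noteq> 0 \<and> norm (inverse z) \<le> 1/\<delta> \<and>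
            (\<forall>m::nat. 1 \<le> m \<longrightarrow> inverse z - of_nat m \<in> Ueps g0 g1 e)"
  proof (intro ballI conjI allI impI)
    fix z assume z: "z \<in> K"
    have "0 \<in> cinterval 0 (1/d)" using d by (auto simp: cint_mem)
    from sep[OF this z] have zd: "\<delta> \<le> norm z" by simp
    thus z0: "z \<noteq> 0" using \<delta> by auto
    have "norm (inverse z) = 1 / norm z" by (simp add: norm_divide inverse_eq_divide)
    also have "\<dots> \<le> 1 / \<delta>" using zd \<delta> by (intro divide_left_mono mult_pos_pos) auto
    finally show "norm (inverse z) \<le> 1 / \<delta>" .
    fix m :: nat assume m: "1 \<le> m"
    show "inverse z - of_nat m \<in> Ueps g0 g1 e"
    proof (rule ccontr)
      define w where "w = inverse z"
      assume "inverse z - of_nat m \<notin> Ueps g0 g1 e"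
      hence h: "g0 - e < Re w - m" "Re w - m < g1 + e" "\<bar>Im w\<bar> < e" by (auto simp: Ueps_def w_def)
      define t where "t = max g0 (min g1 (Re w - m))"
      have t: "g0 \<le> t" "t \<le> g1 \<or> t = g0" "\<bar>Re w - m - t\<bar> < e"
        using h e by (auto simp: t_def)
      define p where "p = m + t"
      have p: "d \<le> p" using m t(1) by (simp add: p_def d_def)
      hence p0: "0 < p" using d by linarith
      have wp: "norm (w - of_real p) < 2 * e"
      proof -
        have "norm (w - of_real p) \<le> \<bar>Re (w - of_real p)\<bar> + \<bar>Im (w - of_real p)\<bar>" by (rule cmod_le)
        also have "\<dots> < e + e" using t(3) h(3) by (simp add: p_def algebra_simps)
        finally show ?thesis by simp
      qed
      have wn: "d / 2 \<le> norm w"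
      proof -
        have "norm (of_real p :: complex) \<le> norm w + norm (w - of_real p)"
          using norm_triangle_ineq2[of "of_real p" w] by (simp add: norm_minus_commute)
        hence "p \<le> norm w + 2 * e" using wp p0 by simp
        thus ?thesis using p e(2) by argo
      qed
      have yJ: "complex_of_real (1/p) \<in> cinterval 0 (1/d)"
        using p p0 d by (auto simp: cint_mem intro!: divide_left_mono)
      have w0: "w \<noteq> 0" using z0 by (simp add: w_def)
      have "dist (complex_of_real (1/p)) z = norm (w - of_real p) / (norm w * p)"
      proof -
        have "complex_of_real (1/p) - z = (w - of_real p) / (w * of_real p)"
          using w0 p0 by (simp add: w_def field_simps)
        thus ?thesis using p0 by (simp add: dist_norm norm_divide norm_mult)
      qed
      also have "\<dots> < 2 * e / (norm w * p)"
        using wp w0 p0 by (intro divide_strict_right_mono) (auto simp: norm_minus_commute)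
      also have "\<dots> \<le> 2 * e / ((d/2) * d)"
        using wn p d e(1) by (intro divide_left_mono mult_mono mult_pos_pos) auto
      also have "\<dots> = 4 * e / d^2" using d by (simp add: field_simps power2_eq_square)
      also have "\<dots> \<le> \<delta>" using e(4) d by (simp add: field_simps)
      finally show False using sep[OF yJ z] by simp
    qed
  qed
  thus ?thesis using e \<delta> by (intro exI[of _ e]) (auto simp: d_def intro!: exI[of _ "1/\<delta>"])
qed


lemma notJ:
  fixes z :: complex and m :: nat
  assumes g0: "-1 < g0" and z: "z \<notin> cinterval 0 (1/(1+g0))"
  shows "z \<noteq> 0" and "1 \<le> m \<Longrightarrow> inverse z - of_nat m \<notin> cinterval g0 g1"
proof -
  show z0: "z \<noteq> 0" using z g0 by (auto simp: cint_mem)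
  assume m: "1 \<le> m"
  show "inverse z - of_nat m \<notin> cinterval g0 g1"
  proof
    assume "inverse z - of_nat m \<in> cinterval g0 g1"
    hence h: "Im (inverse z) = 0" "g0 \<le> Re (inverse z) - m" by (auto simp: cint_mem)
    define p where "p = Re (inverse z)"
    have p: "1 + g0 \<le> p" using h m by (simp add: p_def)
    hence p0: "0 < p" using g0 by linarith
    have "inverse z = of_real p" using h(1) by (simp add: p_def complex_eq_iff)
    hence "z = of_real (1/p)" by (metis inverse_inverse_eq of_real_inverse inverse_eq_divide)
    moreover have "0 \<le> 1/p" "1/p \<le> 1/(1+g0)" using p p0 g0 by (auto intro!: divide_left_mono)
    ultimately show False using z by (simp add: cint_mem)
  qed
qed

lemma deriv_hol:
  assumes "f holomorphic_on S" "open S" "x \<in> S"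
  shows "(f has_field_derivative deriv f x) (at x)"
  using assms by (meson DERIV_deriv_iff_field_differentiable holomorphic_on_imp_differentiable_at)

definition D1 :: "(complex \<Rightarrow> complex) \<Rightarrow> nat \<Rightarrow> complex \<Rightarrow> complex" where
  "D1 \<phi> m z = - (\<phi> (inverse z - of_nat m) - \<phi> (- of_nat m)) + inverse z * deriv \<phi> (inverse z - of_nat m)"

lemma Lg_derivs:
  fixes z :: complex and m :: nat
  assumes g0: "-1 < g0" and hol: "\<phi> holomorphic_on - cinterval g0 g1" and m: "1 \<le> m"
    and z: "z \<notin> cinterval 0 (1/(1+g0))"
  shows "(Lg m \<phi> has_field_derivative D1 \<phi> m z) (at z)"
    and "(D1 \<phi> m has_field_derivative Lg3 m (deriv (deriv \<phi>)) z) (at z)"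
proof -
  have z0: "z \<noteq> 0" by (rule notJ(1)[OF g0 z])
  have zI: "inverse z - of_nat m \<notin> cinterval g0 g1" by (rule notJ(2)[OF g0 z m])
  have op: "open (- cinterval g0 g1)" using closed_cint by auto
  have hol': "deriv \<phi> holomorphic_on - cinterval g0 g1" using hol op by (rule holomorphic_deriv)
  have d0: "(\<phi> has_field_derivative deriv \<phi> (inverse z - of_nat m)) (at (inverse z - of_nat m))"
    using deriv_hol[OF hol op] zI by auto
  have d1: "(deriv \<phi> has_field_derivative deriv (deriv \<phi>) (inverse z - of_nat m)) (at (inverse z - of_nat m))"
    using deriv_hol[OF hol' op] zI by auto
  have dinv: "((\<lambda>z. inverse z - of_nat m) has_field_derivative - (inverse z * inverse z)) (at z)"
    using z0 by (auto intro!: derivative_eq_intros)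
  have F: "((\<lambda>z. \<phi> (inverse z - of_nat m)) has_field_derivative deriv \<phi> (inverse z - of_nat m) * - (inverse z * inverse z)) (at z)"
    by (rule DERIV_chain2[where g="\<lambda>z. inverse z - of_nat m", OF d0 dinv])
  have G: "((\<lambda>z. deriv \<phi> (inverse z - of_nat m)) has_field_derivative deriv (deriv \<phi>) (inverse z - of_nat m) * - (inverse z * inverse z)) (at z)"
    by (rule DERIV_chain2[where g="\<lambda>z. inverse z - of_nat m", OF d1 dinv])
  have "(Lg m \<phi> has_field_derivative
        (- 1 * (\<phi> (inverse z - of_nat m) - \<phi> (- of_nat m)) + (deriv \<phi> (inverse z - of_nat m) * - (inverse z * inverse z) - 0) * - z) + 0) (at z)"
    unfolding Lg_def[abs_def]
    by (intro DERIV_add DERIV_mult DERIV_diff F DERIV_minus DERIV_ident DERIV_const)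
  moreover have "(- 1 * (\<phi> (inverse z - of_nat m) - \<phi> (- of_nat m)) + (deriv \<phi> (inverse z - of_nat m) * - (inverse z * inverse z) - 0) * - z) + 0 = D1 \<phi> m z"
    using z0 by (simp add: D1_def field_simps)
  ultimately show "(Lg m \<phi> has_field_derivative D1 \<phi> m z) (at z)"
    by simp
  have "(D1 \<phi> m has_field_derivative
        - (deriv \<phi> (inverse z - of_nat m) * - (inverse z * inverse z) - 0) + (- (inverse z ^ Suc (Suc 0)) * deriv \<phi> (inverse z - of_nat m) + (deriv (deriv \<phi>) (inverse z - of_nat m) * - (inverse z * inverse z)) * inverse z)) (at z)"
    unfolding D1_def[abs_def]
    by (intro DERIV_add DERIV_mult DERIV_diff F G DERIV_minus DERIV_inverse DERIV_const z0)
  moreover have "- (deriv \<phi> (inverse z - of_nat m) * - (inverse z * inverse z) - 0) + (- (inverse z ^ Suc (Suc 0)) * deriv \<phi> (inverse z - of_nat m) + (deriv (deriv \<phi>) (inverse z - of_nat m) * - (inverse z * inverse z)) * inverse z)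
     = Lg3 m (deriv (deriv \<phi>)) z"
    by (simp add: Lg3_def field_simps power3_eq_cube power2_eq_square)
  ultimately show "(D1 \<phi> m has_field_derivative Lg3 m (deriv (deriv \<phi>)) z) (at z)"
    by simp
qed


lemma bounded_Ok:
  fixes f :: "complex \<Rightarrow> complex"
  assumes Ok: "Ok (int n) (cinterval g0 g1) f" and e: "0 < e"
  shows "\<exists>M. \<forall>w\<in>Ueps g0 g1 e. norm (f w) \<le> M"
proof -
  obtain r g where r: "r > 0" and hg: "g holomorphic_on ball 0 r"
    and eq: "\<And>w. 0 < norm w \<Longrightarrow> norm w < r \<Longrightarrow> inverse w \<notin> cinterval g0 g1 \<Longrightarrow> f (inverse w) = w powi (int n) * g w"
    using Ok unfolding Ok_def by blast
  have hol: "f holomorphic_on - cinterval g0 g1" using Ok by (simp add: Ok_def)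
  define r' where "r' = min (r/2) 1"
  have r': "0 < r'" "r' < r" "r' \<le> 1" using r by (auto simp: r'_def)
  have "compact (g ` cball 0 r')"
    using r' by (intro compact_continuous_image continuous_on_subset[OF holomorphic_on_imp_continuous_on[OF hg]]) auto
  then obtain G where G: "\<And>w. w \<in> cball 0 r' \<Longrightarrow> norm (g w) \<le> G"
    by (meson bounded_iff compact_imp_bounded imageI)
  define R where "R = 1 / r'"
  have R: "0 < R" using r' by (simp add: R_def)
  define S where "S = Ueps g0 g1 e \<inter> cball 0 R"
  have "compact S" unfolding S_def by (rule closed_Int_compact[OF closed_Ueps compact_cball])
  moreover have "continuous_on S f"
    using hol Ueps_notI[OF e] by (intro continuous_on_subset[OF holomorphic_on_imp_continuous_on[OF hol]]) (auto simp: S_def)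
  ultimately have "compact (f ` S)" by (metis compact_continuous_image)
  then obtain M1 where M1: "\<And>w. w \<in> S \<Longrightarrow> norm (f w) \<le> M1"
    by (meson bounded_iff compact_imp_bounded imageI)
  show ?thesis
  proof (intro exI[of _ "max M1 G"] ballI)
    fix w assume w: "w \<in> Ueps g0 g1 e"
    show "norm (f w) \<le> max M1 G"
    proof (cases "norm w \<le> R")
      case True thus ?thesis using M1[of w] w by (simp add: S_def)
    next
      case False
      define u where "u = inverse w"
      have w0: "w \<noteq> 0" using False R by auto
      have un: "norm u \<le> r'"
      proof -
        have "norm u = 1 / norm w" by (simp add: u_def norm_divide inverse_eq_divide)
        also have "\<dots> \<le> 1 / R" using False R by (intro divide_left_mono mult_pos_pos) auto
        finally show ?thesis using r' by (simp add: R_def)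
      qed
      have "f w = u powi (int n) * g u"
        using eq[of u] w0 un r' Ueps_notI[OF e w] by (simp add: u_def)
      hence "norm (f w) = norm u ^ n * norm (g u)" by (simp add: norm_mult norm_power)
      also have "\<dots> \<le> 1 * G"
      proof (rule mult_mono)
        show "norm u ^ n \<le> 1" using un r' by (intro power_le_one) auto
        show "norm (g u) \<le> G" using G un by simp
      qed simp_all
      finally show ?thesis by simp
    qed
  qed
qed

definition SS :: real where "SS = (\<Sum>i. 1 / (real (Suc i))^2)"

lemma summable_SS: "summable (\<lambda>i. 1 / (real (Suc i))^2)"
proof -
  from inverse_power_summable[of 2]
  have "summable (\<lambda>n. (inverse (real_of_nat (Suc n)))\<^sup>2)"
    by (subst summable_Suc_iff) (simp add: power_inverse)
  thus ?thesis by (simp add: power_one_over inverse_eq_divide)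
qed

lemma SS_pos: "0 < SS"
proof -
  have "0 < (\<Sum>i<1. 1 / (real (Suc i))^2)" by simp
  also have "\<dots> \<le> SS" unfolding SS_def by (rule sum_le_suminf[OF summable_SS]) auto
  finally show ?thesis .
qed

lemma mtest_bound:
  fixes f :: "nat \<Rightarrow> complex \<Rightarrow> complex"
  assumes "\<And>i x. x \<in> K \<Longrightarrow> norm (f i x) \<le> A * (1 / (real (Suc i))^2)"
  shows "uniform_limit K (\<lambda>n x. \<Sum>i<n. f i x) (\<lambda>x. suminf (\<lambda>i. f i x)) sequentially"
    and "\<And>x. x \<in> K \<Longrightarrow> summable (\<lambda>i. f i x)"
    and "\<And>x. x \<in> K \<Longrightarrow> norm (suminf (\<lambda>i. f i x)) \<le> A * SS"
proof -
  have sm: "summable (\<lambda>i. A * (1 / (real (Suc i))^2))" using summable_SS by (rule summable_mult)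
  show "uniform_limit K (\<lambda>n x. \<Sum>i<n. f i x) (\<lambda>x. suminf (\<lambda>i. f i x)) sequentially"
    by (rule Weierstrass_m_test[OF assms sm])
  fix x assume x: "x \<in> K"
  have sn: "summable (\<lambda>i. norm (f i x))"
    by (rule summable_comparison_test[OF _ sm]) (use assms x in auto)
  thus "summable (\<lambda>i. f i x)" by (rule summable_norm_cancel)
  have "norm (suminf (\<lambda>i. f i x)) \<le> (\<Sum>i. norm (f i x))" by (rule summable_norm[OF sn])
  also have "\<dots> \<le> (\<Sum>i. A * (1 / (real (Suc i))^2))"
    by (rule suminf_le[OF _ sn sm]) (use assms x in auto)
  also have "\<dots> = A * SS" unfolding SS_def using summable_SS by (rule suminf_mult)
  finally show "norm (suminf (\<lambda>i. f i x)) \<le> A * SS" .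
qed

lemma sum_shift1: "(\<Sum>m=1..n. f m) = (\<Sum>i<n. f (Suc i))"
  using sum.atLeast1_atMost_eq[of f n] by simp


lemma ulim_hol:
  fixes F :: "nat \<Rightarrow> complex \<Rightarrow> complex"
  assumes S: "open S" and hF: "\<And>n. F n holomorphic_on S"
    and loc: "\<And>x. x \<in> S \<Longrightarrow> \<exists>r>0. cball x r \<subseteq> S \<and> uniform_limit (cball x r) F g sequentially"
  shows "g holomorphic_on S"
  unfolding holomorphic_on_open[OF S]
proof
  fix x assume x: "x \<in> S"
  obtain r where r: "r > 0" "cball x r \<subseteq> S" and u: "uniform_limit (cball x r) F g sequentially"
    using loc[OF x] by blast
  have "eventually (\<lambda>n. continuous_on (cball x r) (F n) \<and> (F n) holomorphic_on ball x r) sequentially"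
    using hF r(2) ball_subset_cball[of x r]
    by (intro always_eventually allI conjI)
       (meson holomorphic_on_imp_continuous_on holomorphic_on_subset order_trans)+
  then obtain "g holomorphic_on ball x r"
    using holomorphic_uniform_limit[OF _ u trivial_limit_sequentially] by blast
  thus "\<exists>f'. (g has_field_derivative f') (at x)"
    using deriv_hol[of g "ball x r" x] r by auto
qed

lemma ulim_deriv:
  fixes f f' :: "nat \<Rightarrow> complex \<Rightarrow> complex"
  assumes S: "open S" "cball z r \<subseteq> S" "0 < r"
    and d: "\<And>n x. x \<in> S \<Longrightarrow> (f n has_field_derivative f' n x) (at x)"
    and u: "uniform_limit (cball z r) f g sequentially"
  shows "uniform_limit (cball z (r/2)) f' (deriv g) sequentially"
proof -
  have hf: "f n holomorphic_on S" for n
    unfolding holomorphic_on_open[OF S(1)] using d by blast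
  have "eventually (\<lambda>n. continuous_on (cball z r) (f n) \<and> (f n) holomorphic_on ball z r) sequentially"
    using hf S(2) ball_subset_cball[of z r]
    by (intro always_eventually allI conjI)
       (meson holomorphic_on_imp_continuous_on holomorphic_on_subset order_trans)+
  then obtain cg: "continuous_on (cball z r) g" and hg: "g holomorphic_on ball z r"
    using holomorphic_uniform_limit[OF _ u trivial_limit_sequentially] by blast
  show ?thesis
    unfolding uniform_limit_sequentially_iff
  proof (intro allI impI)
    fix \<epsilon> :: real assume \<epsilon>: "\<epsilon> > 0"
    have er: "\<epsilon> * r / 4 > 0" using \<epsilon> S(3) by simp
    obtain N where N0: "\<forall>n\<ge>N. \<forall>y\<in>cball z r. dist (f n y) (g y) < \<epsilon> * r / 4"
      using u[unfolded uniform_limit_sequentially_iff, rule_format, OF er] by blast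
    have N: "\<And>n y. n \<ge> N \<Longrightarrow> y \<in> cball z r \<Longrightarrow> dist (f n y) (g y) < \<epsilon> * r / 4"
      using N0 by blast
    show "\<exists>N. \<forall>n\<ge>N. \<forall>x\<in>cball z (r / 2). dist (f' n x) (deriv g x) < \<epsilon>"
    proof (intro exI[of _ N] allI impI ballI)
      fix n x assume n: "N \<le> n" and x: "x \<in> cball z (r/2)"
      define h where "h = (\<lambda>y. f n y - g y)"
      have b1: "ball x (r/2) \<subseteq> ball z r"
      proof
        fix y assume "y \<in> ball x (r/2)"
        thus "y \<in> ball z r" using x dist_triangle[of z y x] by (auto simp: dist_commute)
      qed
      have b2: "cball x (r/2) \<subseteq> cball z r"
      proof
        fix y assume "y \<in> cball x (r/2)"
        thus "y \<in> cball z r" using x dist_triangle[of z y x] by (auto simp: dist_commute)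
      qed
      have xb: "x \<in> ball z r" using x S(3) by auto
      have "norm ((deriv ^^ 1) h x) \<le> fact 1 * (\<epsilon> * r / 4) / (r/2) ^ 1"
      proof (rule Cauchy_inequality)
        show "h holomorphic_on ball x (r / 2)" unfolding h_def
          using hf hg b1 S(2) ball_subset_cball[of z r]
          by (intro holomorphic_intros) (meson holomorphic_on_subset order_trans)+
        show "continuous_on (cball x (r / 2)) h" unfolding h_def
          using hf cg b2 S(2)
          by (intro continuous_intros) (meson holomorphic_on_imp_continuous_on continuous_on_subset order_trans)+
        show "0 < r/2" using S(3) by simp
        fix y assume "norm (x - y) = r / 2"
        hence "y \<in> cball x (r/2)" by (simp add: dist_norm)
        hence "y \<in> cball z r" using b2 by blast
        thus "norm (h y) \<le> \<epsilon> * r / 4" using N[OF n] by (auto simp: h_def dist_norm intro: less_imp_le)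
      qed
      hence "norm (deriv h x) \<le> \<epsilon> / 2" using S(3) by simp
      moreover have "deriv h x = f' n x - deriv g x"
      proof -
        have "(h has_field_derivative f' n x - deriv g x) (at x)"
        proof -
          have xS: "x \<in> S" using xb S(2) by auto
          show ?thesis unfolding h_def using d[OF xS, of n] deriv_hol[OF hg open_ball xb]
            by (intro DERIV_diff)
        qed
        thus ?thesis by (rule DERIV_imp_deriv)
      qed
      ultimately show "dist (f' n x) (deriv g x) < \<epsilon>" using \<epsilon> by (simp add: dist_norm)
    qed
  qed
qed

lemma phi_K:
  fixes K :: "complex set"
  assumes g0: "-1 < g0" and hol: "\<phi> holomorphic_on - cinterval g0 g1"
    and e: "e \<le> (1+g0)/2" and bd: "\<forall>w\<in>Ueps g0 g1 e. norm (\<phi> w) \<le> M"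
    and KB: "\<forall>z\<in>K. z \<noteq> 0 \<and> norm (inverse z) \<le> B \<and> (\<forall>m::nat. 1 \<le> m \<longrightarrow> inverse z - of_nat m \<in> Ueps g0 g1 e)"
  shows "uniform_limit K (\<lambda>n z. \<Sum>m=1..n. Lg m \<phi> z) (Top \<phi>) sequentially"
    and "\<forall>z\<in>K. norm (Top \<phi> z) \<le> 10 * B * M / (cc g0)^2 * SS"
proof -
  have bnd: "norm (Lg (Suc i) \<phi> x) \<le> 10 * B * M / (cc g0)^2 * (1 / (real (Suc i))^2)" if x: "x \<in> K" for i x
  proof -
    have "norm (Lg (Suc i) \<phi> x) \<le> 10 * B * M / (cc g0 * real (Suc i))^2"
    proof (rule Lg_bound[OF g0 e hol bd])
      have k: "x \<noteq> 0" "norm (inverse x) \<le> B" "\<forall>m::nat. 1 \<le> m \<longrightarrow> inverse x - of_nat m \<in> Ueps g0 g1 e"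
        using KB x by auto
      show "x \<noteq> 0" "norm (inverse x) \<le> B" by (fact k(1), fact k(2))
      show "inverse x - of_nat (Suc i) \<in> Ueps g0 g1 e" using k(3)[rule_format, of "Suc i"] by simp
    qed simp
    thus ?thesis by (simp add: power_mult_distrib)
  qed
  note mt = mtest_bound[of K "\<lambda>i x. Lg (Suc i) \<phi> x", OF bnd]
  show "uniform_limit K (\<lambda>n z. \<Sum>m=1..n. Lg m \<phi> z) (Top \<phi>) sequentially"
  proof -
    have "(\<lambda>n z. \<Sum>m=1..n. Lg m \<phi> z) = (\<lambda>n z. \<Sum>i<n. Lg (Suc i) \<phi> z)" by (simp only: sum_shift1)
    moreover have "Top \<phi> = (\<lambda>x. suminf (\<lambda>i. Lg (Suc i) \<phi> x))" by (simp add: Top_def[abs_def])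
    ultimately show ?thesis using mt(1) by simp
  qed
  show "\<forall>z\<in>K. norm (Top \<phi> z) \<le> 10 * B * M / (cc g0)^2 * SS"
    using mt(3) by (simp add: Top_def)
qed

lemma psi_K:
  fixes K :: "complex set"
  assumes Ok3: "Ok 3 (cinterval g0 g1) \<psi>" and e: "0 < e" "e \<le> 1/2"
    and bd: "\<forall>w\<in>Ueps g0 g1 e. norm (\<psi> w) \<le> M"
    and KB: "\<forall>z\<in>K. z \<noteq> 0 \<and> norm (inverse z) \<le> B \<and> (\<forall>m::nat. 1 \<le> m \<longrightarrow> inverse z - of_nat m \<in> Ueps g0 g1 e)"
  shows "uniform_limit K (\<lambda>n z. \<Sum>m=1..n. Lg3 m \<psi> z) (Top3 \<psi>) sequentially"
    and "\<forall>z\<in>K. norm (Top3 \<psi> z) \<le> B^3 * M * Qpsi g0 g1 B * SS"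
proof -
  have bnd: "norm (Lg3 (Suc i) \<psi> x) \<le> B^3 * M * Qpsi g0 g1 B * (1 / (real (Suc i))^2)" if x: "x \<in> K" for i x
  proof -
    have "norm (Lg3 (Suc i) \<psi> x) \<le> B^3 * (M * Qpsi g0 g1 B / (real (Suc i))^2)"
    proof -
      have k: "x \<noteq> 0" "norm (inverse x) \<le> B" "\<forall>m::nat. 1 \<le> m \<longrightarrow> inverse x - of_nat m \<in> Ueps g0 g1 e"
        using KB x by auto
      have k3: "inverse x - of_nat (Suc i) \<in> Ueps g0 g1 e" using k(3)[rule_format, of "Suc i"] by simp
      show ?thesis using Lg3_bound[OF Ok3 e bd _ k(2) k3] by simp
    qed
    thus ?thesis by simp
  qed
  note mt = mtest_bound[of K "\<lambda>i x. Lg3 (Suc i) \<psi> x", OF bnd]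
  show "uniform_limit K (\<lambda>n z. \<Sum>m=1..n. Lg3 m \<psi> z) (Top3 \<psi>) sequentially"
  proof -
    have "(\<lambda>n z. \<Sum>m=1..n. Lg3 m \<psi> z) = (\<lambda>n z. \<Sum>i<n. Lg3 (Suc i) \<psi> z)" by (simp only: sum_shift1)
    moreover have "Top3 \<psi> = (\<lambda>x. suminf (\<lambda>i. Lg3 (Suc i) \<psi> x))" by (simp add: Top3_def[abs_def])
    ultimately show ?thesis using mt(1) by simp
  qed
  show "\<forall>z\<in>K. norm (Top3 \<psi> z) \<le> B^3 * M * Qpsi g0 g1 B * SS"
    using mt(3) by (simp add: Top3_def)
qed


lemma openJ: "open (- cinterval a b)" using closed_cint by auto

lemma local_K:
  assumes "x \<in> - cinterval 0 (1/(1+g0))"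
  shows "\<exists>r>0. cball x r \<subseteq> - cinterval 0 (1/(1+g0))"
  using openJ assms open_contains_cball by blast

lemma Top_hol:
  assumes g0: "-1 < g0" and Ok1: "Ok 1 (cinterval g0 g1) \<phi>"
  shows "Top \<phi> holomorphic_on - cinterval 0 (1/(1+g0))"
proof -
  have hol: "\<phi> holomorphic_on - cinterval g0 g1" using Ok1 by (simp add: Ok_def)
  show ?thesis
  proof (rule ulim_hol[OF openJ, where F="\<lambda>n z. \<Sum>m=1..n. Lg m \<phi> z"])
    fix n
    show "(\<lambda>z. \<Sum>m=1..n. Lg m \<phi> z) holomorphic_on - cinterval 0 (1/(1+g0))"
      unfolding holomorphic_on_open[OF openJ]
    proof
      fix x assume x: "x \<in> - cinterval 0 (1/(1+g0))"
      have "((\<lambda>z. \<Sum>m=1..n. Lg m \<phi> z) has_field_derivative (\<Sum>m=1..n. D1 \<phi> m x)) (at x)"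
        using x by (intro DERIV_sum Lg_derivs(1)[OF g0 hol]) auto
      thus "\<exists>f'. ((\<lambda>z. \<Sum>m=1..n. Lg m \<phi> z) has_field_derivative f') (at x)" by blast
    qed
  next
    fix x assume x: "x \<in> - cinterval 0 (1/(1+g0))"
    obtain r where r: "r > 0" "cball x r \<subseteq> - cinterval 0 (1/(1+g0))" using local_K[OF x] by blast
    have "closed (cball x r)" "cball x r \<inter> cinterval 0 (1/(1+g0)) = {}" using r by auto
    from K_choice[OF g0 this, of g1] obtain e B where e: "0 < e" "e \<le> (1+g0)/4"
      and KB: "\<forall>z\<in>cball x r. z \<noteq> 0 \<and> norm (inverse z) \<le> B \<and> (\<forall>m::nat. 1 \<le> m \<longrightarrow> inverse z - of_nat m \<in> Ueps g0 g1 e)"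
      by blast
    obtain M where M: "\<forall>w\<in>Ueps g0 g1 e. norm (\<phi> w) \<le> M" using bounded_Ok[of 1 g0 g1 \<phi> e] Ok1 e by auto
    have e2: "e \<le> (1+g0)/2" using e g0 by simp
    show "\<exists>r>0. cball x r \<subseteq> - cinterval 0 (1/(1+g0)) \<and> uniform_limit (cball x r) (\<lambda>n z. \<Sum>m=1..n. Lg m \<phi> z) (Top \<phi>) sequentially"
      using r phi_K(1)[OF g0 hol e2 M KB] by blast
  qed
qed

lemma Top_Ok:
  assumes g0: "-1 < g0" and Ok1: "Ok 1 (cinterval g0 g1) \<phi>"
  shows "Ok 1 (cinterval 0 (1/(1+g0))) (Top \<phi>)"
proof -
  have hol: "\<phi> holomorphic_on - cinterval g0 g1" using Ok1 by (simp add: Ok_def)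
  define c where "c = cc g0"
  have c: "0 < c" using cc_pos[OF g0] by (simp add: c_def)
  define r0 where "r0 = c / 2"
  have r0: "0 < r0" using c by (simp add: r0_def)
  define e0 where "e0 = (1+g0)/2"
  have e0: "0 < e0" "e0 \<le> (1+g0)/2" using g0 by (auto simp: e0_def)
  obtain M where M: "\<forall>w\<in>Ueps g0 g1 e0. norm (\<phi> w) \<le> M" using bounded_Ok[of 1 g0 g1 \<phi> e0] Ok1 e0 by auto
  have bnd: "norm (P2 \<phi> (Suc i) w) \<le> 10 * M / c^2 * (1 / (real (Suc i))^2)" if w: "w \<in> cball 0 r0" for i w
  proof -
    have "norm w \<le> cc g0 * real (Suc i) / 2"
    proof -
      have "c * 1 \<le> c * real (Suc i)" using c by (intro mult_left_mono) auto
      thus ?thesis using w by (simp add: r0_def c_def)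
    qed
    from P2_bound[OF g0 e0(2) hol M _ this] show ?thesis by (simp add: c_def power_mult_distrib)
  qed
  note mt = mtest_bound[of "cball 0 r0" "\<lambda>i w. P2 \<phi> (Suc i) w", OF bnd]
  have "eventually (\<lambda>n. continuous_on (cball 0 r0) (\<lambda>w. \<Sum>i<n. P2 \<phi> (Suc i) w) \<and>
          (\<lambda>w. \<Sum>i<n. P2 \<phi> (Suc i) w) holomorphic_on ball 0 r0) sequentially"
  proof (intro always_eventually allI)
    fix n
    have h: "(\<lambda>w. \<Sum>i<n. P2 \<phi> (Suc i) w) holomorphic_on ball 0 c"
    proof (intro holomorphic_intros)
      fix i
      have "ball 0 c \<subseteq> ball 0 (cc g0 * real (Suc i))"
      proof -
        have "c * 1 \<le> c * real (Suc i)" using c by (intro mult_left_mono) auto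
        thus ?thesis by (auto simp: c_def)
      qed
      thus "P2 \<phi> (Suc i) holomorphic_on ball 0 c" using P2_hol[OF g0 hol, of "Suc i"] holomorphic_on_subset by auto
    qed
    have sub: "cball 0 r0 \<subseteq> ball 0 c" "ball 0 r0 \<subseteq> ball 0 c" using c by (auto simp: r0_def)
    show "continuous_on (cball 0 r0) (\<lambda>w. \<Sum>i<n. P2 \<phi> (Suc i) w) \<and> (\<lambda>w. \<Sum>i<n. P2 \<phi> (Suc i) w) holomorphic_on ball 0 r0"
      using h sub by (meson holomorphic_on_imp_continuous_on holomorphic_on_subset)
  qed
  then obtain hS: "(\<lambda>w. suminf (\<lambda>i. P2 \<phi> (Suc i) w)) holomorphic_on ball 0 r0"
    using holomorphic_uniform_limit[OF _ mt(1) trivial_limit_sequentially] by blast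
  define G where "G = (\<lambda>w. - suminf (\<lambda>i. P2 \<phi> (Suc i) w))"
  have hG: "G holomorphic_on ball 0 r0" unfolding G_def using hS by (intro holomorphic_intros)
  have eq: "Top \<phi> (inverse w) = w powi 1 * G w" if w: "0 < norm w" "norm w < r0" for w
  proof -
    have w0: "w \<noteq> 0" using w by auto
    have "Top \<phi> (inverse w) = (\<Sum>i. - w * P2 \<phi> (Suc i) w)"
      unfolding Top_def using Lg_eq[OF g0 hol _ w0] by simp
    also have "\<dots> = - w * (\<Sum>i. P2 \<phi> (Suc i) w)"
      using mt(2)[of w] w by (intro suminf_mult) auto
    finally show ?thesis by (simp add: G_def)
  qed
  show ?thesis unfolding Ok_def
    using Top_hol[OF g0 Ok1] r0 hG eq by blast
qed


lemma Lg3_hol: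
  fixes m :: nat
  assumes g0: "-1 < g0" and hol: "\<psi> holomorphic_on - cinterval g0 g1" and m: "1 \<le> m"
  shows "Lg3 m \<psi> holomorphic_on - cinterval 0 (1/(1+g0))"
proof -
  have "(\<lambda>z. inverse z - of_nat m) ` (- cinterval 0 (1/(1+g0))) \<subseteq> - cinterval g0 g1"
    using notJ(2)[OF g0 _ m] by auto
  moreover have "(\<lambda>z. inverse z - of_nat m) holomorphic_on - cinterval 0 (1/(1+g0))"
    using notJ(1)[OF g0] by (auto intro!: holomorphic_intros)
  ultimately have "(\<lambda>z. \<psi> (inverse z - of_nat m)) holomorphic_on - cinterval 0 (1/(1+g0))"
    by (intro holomorphic_on_compose_gen[OF _ hol, unfolded o_def]) auto
  thus ?thesis unfolding Lg3_def[abs_def] using notJ(1)[OF g0]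
    by (auto intro!: holomorphic_intros)
qed

lemma Top3_hol:
  assumes g0: "-1 < g0" and Ok3: "Ok 3 (cinterval g0 g1) \<psi>"
  shows "Top3 \<psi> holomorphic_on - cinterval 0 (1/(1+g0))"
proof -
  have hol: "\<psi> holomorphic_on - cinterval g0 g1" using Ok3 by (simp add: Ok_def)
  show ?thesis
  proof (rule ulim_hol[OF openJ, where F="\<lambda>n z. \<Sum>m=1..n. Lg3 m \<psi> z"])
    fix n
    show "(\<lambda>z. \<Sum>m=1..n. Lg3 m \<psi> z) holomorphic_on - cinterval 0 (1/(1+g0))"
      using Lg3_hol[OF g0 hol] by (intro holomorphic_intros) auto
  next
    fix x assume x: "x \<in> - cinterval 0 (1/(1+g0))"
    obtain r where r: "r > 0" "cball x r \<subseteq> - cinterval 0 (1/(1+g0))" using local_K[OF x] by blast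
    have "closed (cball x r)" "cball x r \<inter> cinterval 0 (1/(1+g0)) = {}" using r by auto
    from K_choice[OF g0 this, of g1] obtain e B where e: "0 < e" "e \<le> 1/2"
      and KB: "\<forall>z\<in>cball x r. z \<noteq> 0 \<and> norm (inverse z) \<le> B \<and> (\<forall>m::nat. 1 \<le> m \<longrightarrow> inverse z - of_nat m \<in> Ueps g0 g1 e)"
      by blast
    obtain M where M: "\<forall>w\<in>Ueps g0 g1 e. norm (\<psi> w) \<le> M" using bounded_Ok[of 3 g0 g1 \<psi> e] Ok3 e by auto
    show "\<exists>r>0. cball x r \<subseteq> - cinterval 0 (1/(1+g0)) \<and> uniform_limit (cball x r) (\<lambda>n z. \<Sum>m=1..n. Lg3 m \<psi> z) (Top3 \<psi>) sequentially"
      using r psi_K(1)[OF Ok3 e M KB] by blast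
  qed
qed

lemma Top3_Ok:
  assumes g0: "-1 < g0" and Ok3: "Ok 3 (cinterval g0 g1) \<psi>"
  shows "Ok 1 (cinterval 0 (1/(1+g0))) (Top3 \<psi>)"
proof -
  have hol: "\<psi> holomorphic_on - cinterval g0 g1" using Ok3 by (simp add: Ok_def)
  define c where "c = cc g0"
  have c: "0 < c" using cc_pos[OF g0] by (simp add: c_def)
  define r0 where "r0 = c / 2"
  have r0: "0 < r0" using c by (simp add: r0_def)
  define e0 where "e0 = min (1/2) ((1+g0)/2)"
  have e0: "0 < e0" "e0 \<le> 1/2" "e0 \<le> (1+g0)/2"
  proof -
    show "0 < e0" using g0 by (simp add: e0_def)
    show "e0 \<le> 1/2" unfolding e0_def by (rule min.cobounded1)
    show "e0 \<le> (1+g0)/2" unfolding e0_def by (rule min.cobounded2)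
  qed
  obtain M where M: "\<forall>w\<in>Ueps g0 g1 e0. norm (\<psi> w) \<le> M" using bounded_Ok[of 3 g0 g1 \<psi> e0] Ok3 e0 by auto
  have bnd: "norm (\<psi> (w - of_nat (Suc i))) \<le> M * Qpsi g0 g1 r0 * (1 / (real (Suc i))^2)" if w: "w \<in> cball 0 r0" for i w
  proof -
    have "norm w \<le> cc g0 * real (Suc i)"
    proof -
      have "norm w \<le> c * 1" using w c by (simp add: r0_def)
      also have "\<dots> \<le> c * real (Suc i)" using c by (intro mult_left_mono) auto
      finally show ?thesis by (simp add: c_def)
    qed
    hence "norm ((w - of_nat (Suc i)) + of_nat (Suc i)) \<le> cc g0 * real (Suc i)" by (simp only: diff_add_cancel)
    from near_m_Ueps[OF g0 _ this e0(3)] have "w - of_nat (Suc i) \<in> Ueps g0 g1 e0" by simp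
    from psi_term[OF Ok3 e0(1,2) M _ _ this, of r0] w show ?thesis by simp
  qed
  note mt = mtest_bound[of "cball 0 r0" "\<lambda>i w. \<psi> (w - of_nat (Suc i))", OF bnd]
  have "eventually (\<lambda>n. continuous_on (cball 0 r0) (\<lambda>w. \<Sum>i<n. \<psi> (w - of_nat (Suc i))) \<and>
          (\<lambda>w. \<Sum>i<n. \<psi> (w - of_nat (Suc i))) holomorphic_on ball 0 r0) sequentially"
  proof (intro always_eventually allI)
    fix n
    have h: "(\<lambda>w. \<Sum>i<n. \<psi> (w - of_nat (Suc i))) holomorphic_on ball 0 c"
    proof (intro holomorphic_intros)
      fix i
      have "ball 0 c \<subseteq> ball 0 (cc g0 * real (Suc i))"
      proof -
        have "c * 1 \<le> c * real (Suc i)" using c by (intro mult_left_mono) auto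
        thus ?thesis by (auto simp: c_def)
      qed
      thus "(\<lambda>w. \<psi> (w - of_nat (Suc i))) holomorphic_on ball 0 c"
        using shift_hol[OF g0 hol, of "Suc i"] holomorphic_on_subset by auto
    qed
    have sub: "cball 0 r0 \<subseteq> ball 0 c" "ball 0 r0 \<subseteq> ball 0 c" using c by (auto simp: r0_def)
    show "continuous_on (cball 0 r0) (\<lambda>w. \<Sum>i<n. \<psi> (w - of_nat (Suc i))) \<and> (\<lambda>w. \<Sum>i<n. \<psi> (w - of_nat (Suc i))) holomorphic_on ball 0 r0"
      using h sub by (meson holomorphic_on_imp_continuous_on holomorphic_on_subset)
  qed
  then obtain hS: "(\<lambda>w. suminf (\<lambda>i. \<psi> (w - of_nat (Suc i)))) holomorphic_on ball 0 r0"
    using holomorphic_uniform_limit[OF _ mt(1) trivial_limit_sequentially] by blast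
  define G where "G = (\<lambda>w. - (w^2) * suminf (\<lambda>i. \<psi> (w - of_nat (Suc i))))"
  have hG: "G holomorphic_on ball 0 r0" unfolding G_def using hS by (intro holomorphic_intros)
  have eq: "Top3 \<psi> (inverse w) = w powi 1 * G w" if w: "0 < norm w" "norm w < r0" for w
  proof -
    have w0: "w \<noteq> 0" using w by auto
    have "Top3 \<psi> (inverse w) = (\<Sum>i. - (w^3) * \<psi> (w - of_nat (Suc i)))"
      unfolding Top3_def Lg3_def by simp
    also have "\<dots> = - (w^3) * (\<Sum>i. \<psi> (w - of_nat (Suc i)))"
      using mt(2)[of w] w by (intro suminf_mult) auto
    finally show ?thesis by (simp add: G_def power3_eq_cube power2_eq_square)
  qed
  show ?thesis unfolding Ok_def
    using Top3_hol[OF g0 Ok3] r0 hG eq by blast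
qed


lemma part5:
  assumes g0: "-1 < g0" and Ok1: "Ok 1 (cinterval g0 g1) \<phi>" and z: "z \<in> - cinterval 0 (1/(1+g0))"
  shows "Top3 (deriv (deriv \<phi>)) z = deriv (deriv (Top \<phi>)) z"
proof -
  have hol: "\<phi> holomorphic_on - cinterval g0 g1" using Ok1 by (simp add: Ok_def)
  obtain r where r: "r > 0" "cball z r \<subseteq> - cinterval 0 (1/(1+g0))" using local_K[OF z] by blast
  have "closed (cball z r)" "cball z r \<inter> cinterval 0 (1/(1+g0)) = {}" using r by auto
  from K_choice[OF g0 this, of g1] obtain e B where e: "0 < e" "e \<le> (1+g0)/4"
    and KB: "\<forall>x\<in>cball z r. x \<noteq> 0 \<and> norm (inverse x) \<le> B \<and> (\<forall>m::nat. 1 \<le> m \<longrightarrow> inverse x - of_nat m \<in> Ueps g0 g1 e)"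
    by blast
  obtain M where M: "\<forall>w\<in>Ueps g0 g1 e. norm (\<phi> w) \<le> M" using bounded_Ok[of 1 g0 g1 \<phi> e] Ok1 e by auto
  have e2: "e \<le> (1+g0)/2" using e g0 by simp
  have u: "uniform_limit (cball z r) (\<lambda>n z. \<Sum>m=1..n. Lg m \<phi> z) (Top \<phi>) sequentially"
    by (rule phi_K(1)[OF g0 hol e2 M KB])
  have d1: "((\<lambda>x. \<Sum>m=1..n. Lg m \<phi> x) has_field_derivative (\<Sum>m=1..n. D1 \<phi> m x)) (at x)"
    if "x \<in> - cinterval 0 (1/(1+g0))" for n x
    using that by (intro DERIV_sum Lg_derivs(1)[OF g0 hol]) auto
  have d2: "((\<lambda>x. \<Sum>m=1..n. D1 \<phi> m x) has_field_derivative (\<Sum>m=1..n. Lg3 m (deriv (deriv \<phi>)) x)) (at x)"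
    if "x \<in> - cinterval 0 (1/(1+g0))" for n x
    using that by (intro DERIV_sum Lg_derivs(2)[OF g0 hol]) auto
  have u1: "uniform_limit (cball z (r/2)) (\<lambda>n x. \<Sum>m=1..n. D1 \<phi> m x) (deriv (Top \<phi>)) sequentially"
    by (rule ulim_deriv[OF openJ r(2) r(1) d1 u])
  have "cball z (r/2) \<subseteq> cball z r" using r by (intro subset_cball) auto
  hence r2: "cball z (r/2) \<subseteq> - cinterval 0 (1/(1+g0))" "0 < r/2" using r by auto
  have u2: "uniform_limit (cball z (r/2/2)) (\<lambda>n x. \<Sum>m=1..n. Lg3 m (deriv (deriv \<phi>)) x) (deriv (deriv (Top \<phi>))) sequentially"
    by (rule ulim_deriv[OF openJ r2 d2 u1])
  have "(\<lambda>n. \<Sum>m=1..n. Lg3 m (deriv (deriv \<phi>)) z) \<longlonglongrightarrow> deriv (deriv (Top \<phi>)) z"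
    using tendsto_uniform_limitI[OF u2, of z] r by simp
  hence "(\<lambda>i. Lg3 (Suc i) (deriv (deriv \<phi>)) z) sums deriv (deriv (Top \<phi>)) z"
    by (simp only: sums_def sum_shift1)
  thus ?thesis unfolding Top3_def by (simp add: sums_unique[symmetric])
qed

theorem proposition3p1:
  fixes \<gamma>0 \<gamma>1 :: real
  assumes "-1 < \<gamma>0" and "\<gamma>0 < \<gamma>1"
  defines "I \<equiv> cinterval \<gamma>0 \<gamma>1"
      and "J \<equiv> cinterval 0 (1 / (1 + \<gamma>0))"
  shows
    "(\<forall>\<phi>. Ok 1 I \<phi> \<longrightarrow>
        Ok 1 J (Top \<phi>) \<and>
        (\<forall>K. closed K \<and> K \<inter> J = {} \<longrightarrow>
           uniform_limit K (\<lambda>n z. \<Sum>m=1..n. Lg m \<phi> z) (Top \<phi>) sequentially))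
     \<and> (\<forall>K. closed K \<and> K \<inter> J = {} \<longrightarrow>
          (\<exists>\<epsilon>>0. \<exists>C>0. \<forall>\<phi>. Ok 1 I \<phi> \<longrightarrow>
             (\<forall>M. (\<forall>w\<in>Ueps \<gamma>0 \<gamma>1 \<epsilon>. norm (\<phi> w) \<le> M) \<longrightarrow>
                  (\<forall>z\<in>K. norm (Top \<phi> z) \<le> C * M))))
     \<and> (\<forall>\<psi>. Ok 3 I \<psi> \<longrightarrow>
        Ok 1 J (Top3 \<psi>) \<and>
        (\<forall>K. closed K \<and> K \<inter> J = {} \<longrightarrow>
           uniform_limit K (\<lambda>n z. \<Sum>m=1..n. Lg3 m \<psi> z) (Top3 \<psi>) sequentially))
     \<and> (\<forall>K. closed K \<and> K \<inter> J = {} \<longrightarrow>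
          (\<exists>\<epsilon>>0. \<exists>C>0. \<forall>\<psi>. Ok 3 I \<psi> \<longrightarrow>
             (\<forall>M. (\<forall>w\<in>Ueps \<gamma>0 \<gamma>1 \<epsilon>. norm (\<psi> w) \<le> M) \<longrightarrow>
                  (\<forall>z\<in>K. norm (Top3 \<psi> z) \<le> C * M))))
     \<and> (\<forall>\<phi>. Ok 1 I \<phi> \<longrightarrow>
        (\<forall>z\<in>- J. Top3 (deriv (deriv \<phi>)) z = deriv (deriv (Top \<phi>)) z))"
proof -
  have g0: "-1 < \<gamma>0" by (rule assms(1))
  have Idef: "I = cinterval \<gamma>0 \<gamma>1" by (simp add: assms(3))
  have Jdef: "J = cinterval 0 (1 / (1 + \<gamma>0))" by (simp add: assms(4))
  have P1: "Ok 1 J (Top \<phi>) \<and> (\<forall>K. closed K \<and> K \<inter> J = {} \<longrightarrow>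
           uniform_limit K (\<lambda>n z. \<Sum>m=1..n. Lg m \<phi> z) (Top \<phi>) sequentially)"
    if Ok1: "Ok 1 I \<phi>" for \<phi>
  proof (intro conjI allI impI)
    show "Ok 1 J (Top \<phi>)" using Top_Ok[OF g0] Ok1 by (simp add: Idef Jdef)
    fix K :: "complex set" assume K: "closed K \<and> K \<inter> J = {}"
    have hol: "\<phi> holomorphic_on - cinterval \<gamma>0 \<gamma>1" using Ok1 by (simp add: Ok_def Idef)
    from K_choice[OF g0, of K \<gamma>1] K obtain e B where e: "0 < e" "e \<le> (1+\<gamma>0)/4"
      and KB: "\<forall>x\<in>K. x \<noteq> 0 \<and> norm (inverse x) \<le> B \<and> (\<forall>m::nat. 1 \<le> m \<longrightarrow> inverse x - of_nat m \<in> Ueps \<gamma>0 \<gamma>1 e)"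
      by (auto simp: Jdef)
    obtain M where M: "\<forall>w\<in>Ueps \<gamma>0 \<gamma>1 e. norm (\<phi> w) \<le> M"
      using bounded_Ok[of 1 \<gamma>0 \<gamma>1 \<phi> e] Ok1 e by (auto simp: Idef)
    have e2: "e \<le> (1+\<gamma>0)/2" using e g0 by simp
    show "uniform_limit K (\<lambda>n z. \<Sum>m=1..n. Lg m \<phi> z) (Top \<phi>) sequentially"
      by (rule phi_K(1)[OF g0 hol e2 M KB])
  qed
  have P2: "\<exists>\<epsilon>>0. \<exists>C>0. \<forall>\<phi>. Ok 1 I \<phi> \<longrightarrow>
             (\<forall>M. (\<forall>w\<in>Ueps \<gamma>0 \<gamma>1 \<epsilon>. norm (\<phi> w) \<le> M) \<longrightarrow>
                  (\<forall>z\<in>K. norm (Top \<phi> z) \<le> C * M))"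
    if K: "closed K \<and> K \<inter> J = {}" for K
  proof -
    from K_choice[OF g0, of K \<gamma>1] K obtain e B where e: "0 < e" "e \<le> (1+\<gamma>0)/4" and B: "B > 0"
      and KB: "\<forall>x\<in>K. x \<noteq> 0 \<and> norm (inverse x) \<le> B \<and> (\<forall>m::nat. 1 \<le> m \<longrightarrow> inverse x - of_nat m \<in> Ueps \<gamma>0 \<gamma>1 e)"
      by (auto simp: Jdef)
    have e2: "e \<le> (1+\<gamma>0)/2" using e g0 by simp
    define C where "C = 10 * B / (cc \<gamma>0)^2 * SS"
    have C: "C > 0" using B cc_pos[OF g0] SS_pos by (simp add: C_def)
    have "\<forall>\<phi>. Ok 1 I \<phi> \<longrightarrow> (\<forall>M. (\<forall>w\<in>Ueps \<gamma>0 \<gamma>1 e. norm (\<phi> w) \<le> M) \<longrightarrow> (\<forall>z\<in>K. norm (Top \<phi> z) \<le> C * M))"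
    proof (intro allI impI ballI)
      fix \<phi> M z assume Ok1: "Ok 1 I \<phi>" and M: "\<forall>w\<in>Ueps \<gamma>0 \<gamma>1 e. norm (\<phi> w) \<le> M" and z: "z \<in> K"
      have hol: "\<phi> holomorphic_on - cinterval \<gamma>0 \<gamma>1" using Ok1 by (simp add: Ok_def Idef)
      have "norm (Top \<phi> z) \<le> 10 * B * M / (cc \<gamma>0)^2 * SS" using phi_K(2)[OF g0 hol e2 M KB] z by blast
      also have "\<dots> = C * M" by (simp add: C_def)
      finally show "norm (Top \<phi> z) \<le> C * M" .
    qed
    thus ?thesis using e C by blast
  qed
  have P3: "Ok 1 J (Top3 \<psi>) \<and> (\<forall>K. closed K \<and> K \<inter> J = {} \<longrightarrow>
           uniform_limit K (\<lambda>n z. \<Sum>m=1..n. Lg3 m \<psi> z) (Top3 \<psi>) sequentially)"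
    if Ok3: "Ok 3 I \<psi>" for \<psi>
  proof (intro conjI allI impI)
    show "Ok 1 J (Top3 \<psi>)" using Top3_Ok[OF g0] Ok3 by (simp add: Idef Jdef)
    fix K :: "complex set" assume K: "closed K \<and> K \<inter> J = {}"
    from K_choice[OF g0, of K \<gamma>1] K obtain e B where e: "0 < e" "e \<le> 1/2"
      and KB: "\<forall>x\<in>K. x \<noteq> 0 \<and> norm (inverse x) \<le> B \<and> (\<forall>m::nat. 1 \<le> m \<longrightarrow> inverse x - of_nat m \<in> Ueps \<gamma>0 \<gamma>1 e)"
      by (auto simp: Jdef)
    obtain M where M: "\<forall>w\<in>Ueps \<gamma>0 \<gamma>1 e. norm (\<psi> w) \<le> M"
      using bounded_Ok[of 3 \<gamma>0 \<gamma>1 \<psi> e] Ok3 e by (auto simp: Idef)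
    have Ok3': "Ok 3 (cinterval \<gamma>0 \<gamma>1) \<psi>" using Ok3 by (simp add: Idef)
    show "uniform_limit K (\<lambda>n z. \<Sum>m=1..n. Lg3 m \<psi> z) (Top3 \<psi>) sequentially"
      by (rule psi_K(1)[OF Ok3' e M KB])
  qed
  have P4: "\<exists>\<epsilon>>0. \<exists>C>0. \<forall>\<psi>. Ok 3 I \<psi> \<longrightarrow>
             (\<forall>M. (\<forall>w\<in>Ueps \<gamma>0 \<gamma>1 \<epsilon>. norm (\<psi> w) \<le> M) \<longrightarrow>
                  (\<forall>z\<in>K. norm (Top3 \<psi> z) \<le> C * M))"
    if K: "closed K \<and> K \<inter> J = {}" for K
  proof -
    from K_choice[OF g0, of K \<gamma>1] K obtain e B where e: "0 < e" "e \<le> 1/2" and B: "B > 0"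
      and KB: "\<forall>x\<in>K. x \<noteq> 0 \<and> norm (inverse x) \<le> B \<and> (\<forall>m::nat. 1 \<le> m \<longrightarrow> inverse x - of_nat m \<in> Ueps \<gamma>0 \<gamma>1 e)"
      by (auto simp: Jdef)
    define C where "C = B^3 * Qpsi \<gamma>0 \<gamma>1 B * SS"
    have rp: "0 < \<bar>\<gamma>0\<bar> + \<bar>\<gamma>1\<bar> + 2" by simp
    have "0 < 8 * (\<bar>\<gamma>0\<bar> + \<bar>\<gamma>1\<bar> + 2)^3" using rp by simp
    hence Q: "Qpsi \<gamma>0 \<gamma>1 B > 0" unfolding Qpsi_def by (rule add_pos_nonneg[OF _ zero_le_power2])
    have C: "C > 0" using B Q SS_pos by (simp add: C_def)
    have "\<forall>\<psi>. Ok 3 I \<psi> \<longrightarrow> (\<forall>M. (\<forall>w\<in>Ueps \<gamma>0 \<gamma>1 e. norm (\<psi> w) \<le> M) \<longrightarrow> (\<forall>z\<in>K. norm (Top3 \<psi> z) \<le> C * M))"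
    proof (intro allI impI ballI)
      fix \<psi> M z assume Ok3: "Ok 3 I \<psi>" and M: "\<forall>w\<in>Ueps \<gamma>0 \<gamma>1 e. norm (\<psi> w) \<le> M" and z: "z \<in> K"
      have Ok3': "Ok 3 (cinterval \<gamma>0 \<gamma>1) \<psi>" using Ok3 by (simp add: Idef)
      have "norm (Top3 \<psi> z) \<le> B^3 * M * Qpsi \<gamma>0 \<gamma>1 B * SS" using psi_K(2)[OF Ok3' e M KB] z by blast
      also have "\<dots> = C * M" by (simp add: C_def)
      finally show "norm (Top3 \<psi> z) \<le> C * M" .
    qed
    thus ?thesis using e C by blast
  qed
  have P5: "\<forall>z\<in>- J. Top3 (deriv (deriv \<phi>)) z = deriv (deriv (Top \<phi>)) z" if Ok1: "Ok 1 I \<phi>" for \<phi>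
    using part5[OF g0, of \<gamma>1 \<phi>] Ok1 by (simp add: Idef Jdef)
  show ?thesis using P1 P2 P3 P4 P5 by blast
qed


end
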